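(* Let $G=(\mathcal{X},\mathcal{A},\mu,V)$ be a $k$-player free game with $\mu=\mu_1\otimes\cdots\otimes\mu_k$, and let $\gamma>0$. Suppose that for each $j\in[k]$, $\mathcal{X}'_j$ is a finite alphabet and $f_j:\mathcal{X}'_j\to\mathcal{X}_j$ is a map such that, for $U_j$ uniformly random on $\mathcal{X}'_j$, the distribution of $f_j(U_j)$ is within total variation distance $\gamma/k$ of $\mu_j$. Let $G'=(\mathcal{X}',\mathcal{A},U,V')$ where $\mathcal{X}'=\mathcal{X}'_1\times\cdots\times\mathcal{X}'_k$, $U$ is the uniform distribution on $\mathcal{X}'$, and $V'(x',a)=V\big((f_1(x'_1),\dots,f_k(x'_k)),a\big)$. Then $|\mathrm{val}^*(G')-\mathrm{val}^*(G)|\le\gamma$.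
   Context: A $k$-player game $G=(\mathcal{X},\mathcal{A},\mu,V)$ has finite product alphabets $\mathcal{X}=\prod_j\mathcal{X}_j$, $\mathcal{A}=\prod_j\mathcal{A}_j$, input distribution $\mu$ on $\mathcal{X}$ and predicate $V:\mathcal{X}\times\mathcal{A}\to\{0,1\}$; the referee samples $x\leftarrow\mu$, sends $x_j$ to player $j$, and accepts iff $V(x,a)=1$. It is free if $\mu$ is a product distribution. The entangled value $\mathrm{val}^*(G)$ is the supremum of the acceptance probability over strategies where the players share a finite-dimensional entangled state and each applies a POVM (depending on their own input) to their share to produce their answer. *)

theory Defs
  imports "HOL-Analysis.Analysis"
begin

text \<open>Players are indexed by j < k. Inputs/answers are tuples x :: nat => 'x restricted
  (extensionally) to {..<k}. A d x d complex matrix is a function nat => nat => complex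
  of which only the entries with indices < d matter.\<close>

definition psd_mat :: "nat \<Rightarrow> (nat \<Rightarrow> nat \<Rightarrow> complex) \<Rightarrow> bool" where
  "psd_mat d M \<longleftrightarrow>
     (\<forall>r<d. \<forall>c<d. M r c = cnj (M c r)) \<and>
     (\<forall>v :: nat \<Rightarrow> complex. 0 \<le> Re (\<Sum>r<d. \<Sum>c<d. cnj (v r) * M r c * v c))"

definition povm :: "nat \<Rightarrow> 'x set \<Rightarrow> 'a set \<Rightarrow> ('x \<Rightarrow> 'a \<Rightarrow> nat \<Rightarrow> nat \<Rightarrow> complex) \<Rightarrow> bool" where
  "povm d X A M \<longleftrightarrow>
     (\<forall>x\<in>X. (\<forall>a\<in>A. psd_mat d (M x a)) \<and>
        (\<forall>r<d. \<forall>c<d. (\<Sum>a\<in>A. M x a r c) = (if r = c then 1 else 0)))"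

text \<open>Basis index tuples of the tensor product of the spaces C^(d j), j < k.\<close>
definition idx :: "nat \<Rightarrow> (nat \<Rightarrow> nat) \<Rightarrow> (nat \<Rightarrow> nat) set" where
  "idx k d = PiE {..<k} (\<lambda>j. {..<d j})"

definition ent_strategy :: "nat \<Rightarrow> (nat \<Rightarrow> 'x set) \<Rightarrow> (nat \<Rightarrow> 'a set) \<Rightarrow> (nat \<Rightarrow> nat)
    \<Rightarrow> ((nat \<Rightarrow> nat) \<Rightarrow> complex) \<Rightarrow> (nat \<Rightarrow> 'x \<Rightarrow> 'a \<Rightarrow> nat \<Rightarrow> nat \<Rightarrow> complex) \<Rightarrow> bool" where
  "ent_strategy k X A d psi M \<longleftrightarrow>
     (\<forall>j<k. 1 \<le> d j \<and> povm (d j) (X j) (A j) (M j)) \<and>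
     (\<Sum>i\<in>idx k d. (cmod (psi i))\<^sup>2) = 1"

text \<open>p(a|x) = <psi| (M_1^{x_1 a_1} \<otimes> ... \<otimes> M_k^{x_k a_k}) |psi>, written out in coordinates.\<close>
definition ent_prob :: "nat \<Rightarrow> (nat \<Rightarrow> nat) \<Rightarrow> ((nat \<Rightarrow> nat) \<Rightarrow> complex)
    \<Rightarrow> (nat \<Rightarrow> 'x \<Rightarrow> 'a \<Rightarrow> nat \<Rightarrow> nat \<Rightarrow> complex) \<Rightarrow> (nat \<Rightarrow> 'x) \<Rightarrow> (nat \<Rightarrow> 'a) \<Rightarrow> real" where
  "ent_prob k d psi M x a =
     Re (\<Sum>i\<in>idx k d. \<Sum>i'\<in>idx k d.
           cnj (psi i) * (\<Prod>j<k. M j (x j) (a j) (i j) (i' j)) * psi i')"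

definition ent_win :: "nat \<Rightarrow> (nat \<Rightarrow> 'x set) \<Rightarrow> (nat \<Rightarrow> 'a set) \<Rightarrow> ((nat \<Rightarrow> 'x) \<Rightarrow> real)
    \<Rightarrow> ((nat \<Rightarrow> 'x) \<Rightarrow> (nat \<Rightarrow> 'a) \<Rightarrow> bool) \<Rightarrow> (nat \<Rightarrow> nat) \<Rightarrow> ((nat \<Rightarrow> nat) \<Rightarrow> complex)
    \<Rightarrow> (nat \<Rightarrow> 'x \<Rightarrow> 'a \<Rightarrow> nat \<Rightarrow> nat \<Rightarrow> complex) \<Rightarrow> real" where
  "ent_win k X A mu V d psi M =
     (\<Sum>x\<in>PiE {..<k} X. mu x * (\<Sum>a\<in>PiE {..<k} A. if V x a then ent_prob k d psi M x a else 0))"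

definition val_star :: "nat \<Rightarrow> (nat \<Rightarrow> 'x set) \<Rightarrow> (nat \<Rightarrow> 'a set) \<Rightarrow> ((nat \<Rightarrow> 'x) \<Rightarrow> real)
    \<Rightarrow> ((nat \<Rightarrow> 'x) \<Rightarrow> (nat \<Rightarrow> 'a) \<Rightarrow> bool) \<Rightarrow> real" where
  "val_star k X A mu V =
     Sup {ent_win k X A mu V d psi M | d psi M. ent_strategy k X A d psi M}"

definition tv_dist :: "'x set \<Rightarrow> ('x \<Rightarrow> real) \<Rightarrow> ('x \<Rightarrow> real) \<Rightarrow> real" where
  "tv_dist S p q = (1/2) * (\<Sum>x\<in>S. \<bar>p x - q x\<bar>)"

definition push_unif :: "'y set \<Rightarrow> ('y \<Rightarrow> 'x) \<Rightarrow> 'x \<Rightarrow> real" where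
  "push_unif Y f x = real (card {y\<in>Y. f y = x}) / real (card Y)"

end

theory Submission
  imports Defs
begin


definition qf :: "nat \<Rightarrow> (nat \<Rightarrow> nat \<Rightarrow> complex) \<Rightarrow> (nat \<Rightarrow> complex) \<Rightarrow> complex" where
  "qf d M v = (\<Sum>r<d. \<Sum>c<d. cnj (v r) * M r c * v c)"

lemma sum_two_delta:
  fixes h :: "nat \<Rightarrow> complex"
  assumes "finite S" "m \<in> S" "s \<in> S" "m \<noteq> s"
  shows "(\<Sum>r\<in>S. h r * (if r = m then a else if r = s then b else 0)) = h m * a + h s * b"
proof -
  have "(\<Sum>r\<in>S. h r * (if r = m then a else if r = s then b else 0))
      = (\<Sum>r\<in>S. (if r = m then h r * a else 0) + (if r = s then h r * b else 0))"
    by (rule sum.cong) (use assms in auto)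
  also have "\<dots> = h m * a + h s * b" using assms by (simp add: sum.distrib)
  finally show ?thesis .
qed

lemma sum_mult_delta:
  fixes g :: "'b \<Rightarrow> 'a::comm_semiring_1"
  assumes "finite S"
  shows "(\<Sum>c\<in>S. g c * (if c = m then 1 else 0)) = (if m \<in> S then g m else 0)"
    "(\<Sum>c\<in>S. (if c = m then 1 else 0) * g c) = (if m \<in> S then g m else 0)"
proof -
  have "(\<Sum>c\<in>S. g c * (if c = m then 1 else 0)) = (\<Sum>c\<in>S. if c = m then g c else 0)"
    by (rule sum.cong) auto
  then show "(\<Sum>c\<in>S. g c * (if c = m then 1 else 0)) = (if m \<in> S then g m else 0)"
    using assms by (simp add: sum.delta')
  have "(\<Sum>c\<in>S. (if c = m then 1 else 0) * g c) = (\<Sum>c\<in>S. if c = m then g c else 0)"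
    by (rule sum.cong) auto
  then show "(\<Sum>c\<in>S. (if c = m then 1 else 0) * g c) = (if m \<in> S then g m else 0)"
    using assms by (simp add: sum.delta')
qed

lemma sum_delta_gen:
  fixes g :: "'b \<Rightarrow> 'a::comm_semiring_1"
  assumes "finite S" "m \<in> S"
  shows "(\<Sum>c\<in>S. g c * (if c = m then a else 0)) = g m * a"
    "(\<Sum>c\<in>S. (if c = m then a else 0) * g c) = a * g m"
proof -
  have "(\<Sum>c\<in>S. g c * (if c = m then a else 0)) = (\<Sum>c\<in>S. if c = m then g c * a else 0)"
    by (rule sum.cong) auto
  then show "(\<Sum>c\<in>S. g c * (if c = m then a else 0)) = g m * a"
    using assms by (simp add: sum.delta')
  have "(\<Sum>c\<in>S. (if c = m then a else 0) * g c) = (\<Sum>c\<in>S. if c = m then a * g c else 0)"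
    by (rule sum.cong) auto
  then show "(\<Sum>c\<in>S. (if c = m then a else 0) * g c) = a * g m"
    using assms by (simp add: sum.delta')
qed

lemma cnj_if0[simp]: "cnj (if P then a else 0) = (if P then cnj a else 0)" by simp

lemma cnj_delta[simp]: "cnj (if P then 1 else 0) = (if P then 1 else 0)" by simp

lemma psd_diag_real:
  assumes "psd_mat d M" "m < d"
  shows "M m m = complex_of_real (Re (M m m))" "0 \<le> Re (M m m)"
proof -
  have "M m m = cnj (M m m)" using assms unfolding psd_mat_def by blast
  then show "M m m = complex_of_real (Re (M m m))" by (metis Reals_cnj_iff complex_is_Real_iff of_real_Re)
  have "\<forall>v. 0 \<le> Re (qf d M v)" using assms(1) unfolding psd_mat_def qf_def by blast
  then have "0 \<le> Re (qf d M (\<lambda>r. if r = m then 1 else 0))" by blast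
  moreover have "qf d M (\<lambda>r. if r = m then 1 else 0) = M m m"
    using assms(2) by (simp add: qf_def sum_mult_delta sum_delta_gen)
  ultimately show "0 \<le> Re (M m m)" by simp
qed

lemma psd_qf: "psd_mat d M \<Longrightarrow> 0 \<le> Re (qf d M v)"
  unfolding psd_mat_def qf_def by blast

lemma psd_herm: "psd_mat d M \<Longrightarrow> r < d \<Longrightarrow> c < d \<Longrightarrow> M r c = cnj (M c r)"
  unfolding psd_mat_def by blast

lemma psd_zero_row:
  assumes P: "psd_mat d M" and m: "m < d" and s: "s < d" and z0: "M m m = 0"
  shows "M m s = 0"
proof (rule ccontr)
  assume nz: "M m s \<noteq> 0"
  then have ms: "m \<noteq> s" using z0 by auto
  define z where "z = M m s"
  have Msm: "M s m = cnj z" using psd_herm[OF P s m] unfolding z_def by simp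
  define R :: real where "R = (\<bar>Re (M s s)\<bar> + 1) / (2 * (cmod z)^2)"
  define t where "t = - complex_of_real R * z"
  define v where "v = (\<lambda>r. if r = m then t else if r = s then 1 else (0::complex))"
  have cv: "cnj (v r) = (if r = m then cnj t else if r = s then 1 else 0)" for r
    unfolding v_def by auto
  have inner: "(\<Sum>c<d. cnj (v r) * M r c * v c) = cnj (v r) * M r m * t + cnj (v r) * M r s" for r
  proof -
    have "(\<Sum>c<d. cnj (v r) * M r c * v c) = (\<Sum>c<d. (cnj (v r) * M r c) * (if c = m then t else if c = s then 1 else 0))"
      by (rule sum.cong) (simp_all add: v_def)
    also have "\<dots> = cnj (v r) * M r m * t + cnj (v r) * M r s * 1"
      by (rule sum_two_delta) (use m s ms in auto)
    finally show ?thesis by (simp only: mult_1_right)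
  qed
  have "qf d M v = (\<Sum>r<d. cnj (v r) * M r m * t + cnj (v r) * M r s)"
    by (simp only: qf_def inner)
  also have "\<dots> = (\<Sum>r<d. (M r m * t + M r s) * (if r = m then cnj t else if r = s then 1 else 0))"
    by (rule sum.cong) (simp_all only: cv, auto simp: algebra_simps)
  also have "\<dots> = (M m m * t + M m s) * cnj t + (M s m * t + M s s) * 1"
    by (rule sum_two_delta) (use m s ms in auto)
  also have "\<dots> = z * cnj t + cnj z * t + M s s" using z0 Msm z_def by simp
  finally have q: "qf d M v = z * cnj t + cnj z * t + M s s" .
  have zz: "z * cnj z = complex_of_real ((cmod z)^2)" using complex_norm_square[of z] by simp
  have "z * cnj t + cnj z * t = - 2 * complex_of_real R * (z * cnj z)"
    unfolding t_def by (simp add: algebra_simps)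
  also have "\<dots> = complex_of_real (- 2 * R * (cmod z)^2)" unfolding zz by simp
  finally have "Re (qf d M v) = - 2 * R * (cmod z)^2 + Re (M s s)" unfolding q by simp
  also have "\<dots> = - (\<bar>Re (M s s)\<bar> + 1) + Re (M s s)"
    unfolding R_def using nz z_def by simp
  also have "\<dots> < 0" by linarith
  finally show False using psd_qf[OF P, of v] by linarith
qed

definition bil :: "nat \<Rightarrow> (nat \<Rightarrow> nat \<Rightarrow> complex) \<Rightarrow> (nat \<Rightarrow> complex) \<Rightarrow> (nat \<Rightarrow> complex) \<Rightarrow> complex" where
  "bil d M a b = (\<Sum>r<d. \<Sum>c<d. cnj (a r) * M r c * b c)"

lemma bil_diff: "bil d M (\<lambda>r. v r - u r) (\<lambda>r. v r - u r) = bil d M v v - bil d M v u - bil d M u v + bil d M u u"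
proof -
  have "bil d M (\<lambda>r. v r - u r) (\<lambda>r. v r - u r) =
     (\<Sum>r<d. \<Sum>c<d. (cnj (v r) * M r c * v c - cnj (v r) * M r c * u c) - (cnj (u r) * M r c * v c - cnj (u r) * M r c * u c))"
    unfolding bil_def by (intro sum.cong refl) (simp add: algebra_simps)
  then show ?thesis unfolding bil_def by (simp add: sum_subtractf)
qed

lemma schur_psd:
  assumes P: "psd_mat d M" and m: "m < d" and p: "0 < Re (M m m)"
  shows "psd_mat d (\<lambda>r s. M r s - M r m * M m s / complex_of_real (Re (M m m)))"
proof -
  define p where "p = Re (M m m)"
  have Mmm: "M m m = complex_of_real p" using psd_diag_real(1)[OF P m] p_def by simp
  have herm: "M r s - M r m * M m s / complex_of_real p = cnj (M s r - M s m * M m r / complex_of_real p)"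
    if "r < d" "s < d" for r s
    using psd_herm[OF P that(1) that(2)] psd_herm[OF P that(1) m] psd_herm[OF P m that(2)]
    by (simp add: algebra_simps)
  have quad: "0 \<le> Re (\<Sum>r<d. \<Sum>c<d. cnj (v r) * (M r c - M r m * M m c / complex_of_real p) * v c)" for v
  proof -
    define z where "z = (\<Sum>c<d. M m c * v c)"
    define \<alpha> where "\<alpha> = z / complex_of_real p"
    define u where "u = (\<lambda>r. if r = m then \<alpha> else 0)"
    have zc: "(\<Sum>r<d. cnj (v r) * M r m) = cnj z"
      unfolding z_def by (simp add: mult.commute psd_herm[OF P _ m])
    have b1: "bil d M v u = cnj z * \<alpha>"
    proof -
      have "bil d M v u = (\<Sum>r<d. cnj (v r) * M r m * \<alpha>)"
        unfolding bil_def u_def using m by (simp add: sum_delta_gen)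
      also have "\<dots> = cnj z * \<alpha>" using zc by (simp add: sum_distrib_right[symmetric])
      finally show ?thesis .
    qed
    have b2: "bil d M u v = cnj \<alpha> * z"
    proof -
      have "bil d M u v = (\<Sum>r<d. (if r = m then cnj \<alpha> else 0) * (\<Sum>c<d. M r c * v c))"
        unfolding bil_def u_def by (simp add: sum_distrib_left mult.assoc)
      also have "\<dots> = cnj \<alpha> * z" unfolding z_def using m by (simp add: sum_delta_gen)
      finally show ?thesis .
    qed
    have b3: "bil d M u u = cnj \<alpha> * \<alpha> * complex_of_real p"
    proof -
      have "bil d M u u = (\<Sum>r<d. (if r = m then cnj \<alpha> else 0) * (\<Sum>c<d. M r c * (if c = m then \<alpha> else 0)))"
        unfolding bil_def u_def by (simp add: sum_distrib_left mult.assoc)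
      also have "\<dots> = cnj \<alpha> * (M m m * \<alpha>)" using m by (simp add: sum_delta_gen)
      finally show ?thesis using Mmm by simp
    qed
    have lhs: "(\<Sum>r<d. \<Sum>c<d. cnj (v r) * (M r c - M r m * M m c / complex_of_real p) * v c)
       = bil d M v v - cnj z * z / complex_of_real p"
    proof -
      have "(\<Sum>r<d. \<Sum>c<d. cnj (v r) * (M r c - M r m * M m c / complex_of_real p) * v c)
         = (\<Sum>r<d. \<Sum>c<d. cnj (v r) * M r c * v c - (cnj (v r) * M r m) * (M m c * v c) / complex_of_real p)"
        by (intro sum.cong refl) (simp add: algebra_simps)
      also have "\<dots> = bil d M v v - (\<Sum>r<d. cnj (v r) * M r m) * (\<Sum>c<d. M m c * v c) / complex_of_real p"
        unfolding bil_def by (simp add: sum_subtractf sum_divide_distrib sum_product)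
      finally show ?thesis unfolding zc z_def .
    qed
    have "bil d M (\<lambda>r. v r - u r) (\<lambda>r. v r - u r) = bil d M v v - cnj z * z / complex_of_real p"
      unfolding bil_diff b1 b2 b3 \<alpha>_def using p p_def by (simp add: field_simps)
    moreover have "0 \<le> Re (bil d M (\<lambda>r. v r - u r) (\<lambda>r. v r - u r))"
      using psd_qf[OF P, of "\<lambda>r. v r - u r"] unfolding qf_def bil_def .
    ultimately show ?thesis unfolding lhs by simp
  qed
  show ?thesis unfolding psd_mat_def p_def[symmetric] using herm quad by blast
qed

lemma psd_decomp_aux:
  "psd_mat d M \<Longrightarrow> (\<forall>r<d. \<forall>s<d. (r < m \<or> s < m) \<longrightarrow> M r s = 0) \<Longrightarrow>
   \<exists>(n::nat) c. \<forall>r<d. \<forall>s<d. M r s = (\<Sum>l<n. c l r * cnj (c l s))"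
proof (induction "d - m" arbitrary: m M)
  case 0
  then have "\<forall>r<d. \<forall>s<d. M r s = (\<Sum>l<(0::nat). (\<lambda>_ _. 0) l r * cnj ((\<lambda>_ _. 0) l s))" by auto
  then show ?case by (intro exI)
next
  case (Suc q)
  then have m: "m < d" by simp
  have P: "psd_mat d M" by fact
  have Z: "\<forall>r<d. \<forall>s<d. (r < m \<or> s < m) \<longrightarrow> M r s = 0" by fact
  have q: "q = d - Suc m" using Suc.hyps(2) by simp
  show ?case
  proof (cases "M m m = 0")
    case True
    have row: "M m s = 0" if "s < d" for s using psd_zero_row[OF P m that True] .
    have col: "M s m = 0" if "s < d" for s using psd_herm[OF P that m] row[OF that] by simp
    have "\<forall>r<d. \<forall>s<d. (r < Suc m \<or> s < Suc m) \<longrightarrow> M r s = 0"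
      using Z row col by (metis less_Suc_eq)
    then show ?thesis by (rule Suc.hyps(1)[OF q P])
  next
    case False
    define p where "p = Re (M m m)"
    have Mmm: "M m m = complex_of_real p" using psd_diag_real(1)[OF P m] p_def by simp
    have pp: "0 < p" proof -
      have "p \<noteq> 0" using False Mmm by auto
      then show ?thesis using psd_diag_real(2)[OF P m] p_def by linarith
    qed
    define M' where "M' = (\<lambda>r s. M r s - M r m * M m s / complex_of_real p)"
    have P': "psd_mat d M'" unfolding M'_def p_def using schur_psd[OF P m] pp p_def by simp
    have Z': "\<forall>r<d. \<forall>s<d. (r < Suc m \<or> s < Suc m) \<longrightarrow> M' r s = 0"
    proof (intro allI impI)
      fix r s assume rs: "r < d" "s < d" "r < Suc m \<or> s < Suc m"
      show "M' r s = 0"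
      proof (cases "r < m \<or> s < m")
        case True
        then show ?thesis unfolding M'_def using Z rs m by auto
      next
        case False
        then have "r = m \<or> s = m" using rs by auto
        then show ?thesis unfolding M'_def using Mmm pp by auto
      qed
    qed
    obtain n :: nat and c where c: "\<forall>r<d. \<forall>s<d. M' r s = (\<Sum>l<n. c l r * cnj (c l s))"
      using Suc.hyps(1)[OF q P' Z'] by blast
    define c' where "c' = (\<lambda>l. if l < n then c l else (\<lambda>r. M r m / complex_of_real (sqrt p)))"
    have "M r s = (\<Sum>l<Suc n. c' l r * cnj (c' l s))" if "r < d" "s < d" for r s
    proof -
      have sq: "complex_of_real (sqrt p) * complex_of_real (sqrt p) = complex_of_real p"
        proof -
        have "sqrt p * sqrt p = p" using pp by simp
        then show ?thesis by (metis of_real_mult)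
      qed
      have "(\<Sum>l<Suc n. c' l r * cnj (c' l s)) = (\<Sum>l<n. c l r * cnj (c l s)) + M r m / complex_of_real (sqrt p) * cnj (M s m / complex_of_real (sqrt p))"
        unfolding c'_def by simp
      also have "\<dots> = M' r s + M r m * M m s / complex_of_real p"
      proof -
        have e1: "(\<Sum>l<n. c l r * cnj (c l s)) = M' r s" using c that by simp
        have "M r m / complex_of_real (sqrt p) * cnj (M s m / complex_of_real (sqrt p))
            = M r m * cnj (M s m) / (complex_of_real (sqrt p) * complex_of_real (sqrt p))" by simp
        also have "\<dots> = M r m * M m s / complex_of_real p"
          unfolding sq using psd_herm[OF P m that(2)] by simp
        finally show ?thesis using e1 by simp
      qed
      also have "\<dots> = M r s" unfolding M'_def by simp
      finally show ?thesis by simp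
    qed
    then have "\<forall>r<d. \<forall>s<d. M r s = (\<Sum>l<Suc n. c' l r * cnj (c' l s))" by simp
    then show ?thesis by (intro exI)
  qed
qed

lemma psd_decomp:
  "psd_mat d M \<Longrightarrow> \<exists>(n::nat) c. \<forall>r<d. \<forall>s<d. M r s = (\<Sum>l<n. c l r * cnj (c l s))"
  using psd_decomp_aux[of d M 0] by simp



lemma prod_delta:
  fixes i i' :: "nat \<Rightarrow> nat"
  shows "(\<Prod>j<k. (if i j = i' j then 1 else 0)) = (if (\<forall>j<k. i j = i' j) then 1 else (0::complex))"
proof (cases "\<forall>j<k. i j = i' j")
  case True then show ?thesis by simp
next
  case False
  then obtain j where "j < k" "i j \<noteq> i' j" by auto
  then show ?thesis using False by (intro trans[OF prod_zero]) auto
qed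

lemma idx_eq:
  assumes "i \<in> idx k d" "i' \<in> idx k d"
  shows "(\<forall>j<k. i j = i' j) \<longleftrightarrow> i = i'"
  using assms unfolding idx_def by (metis PiE_ext lessThan_iff)

lemma ent_prob_sum:
  assumes finA: "\<forall>j<k. finite (A j)"
    and compl: "\<forall>j<k. \<forall>r<d j. \<forall>c<d j. (\<Sum>a\<in>A j. M j (x j) a r c) = (if r = c then 1 else 0)"
  shows "(\<Sum>a\<in>PiE {..<k} A. ent_prob k d psi M x a) = (\<Sum>i\<in>idx k d. (cmod (psi i))\<^sup>2)"
proof -
  have finI: "finite (idx k d)" unfolding idx_def by (simp add: finite_PiE)
  have key: "(\<Sum>a\<in>PiE {..<k} A. \<Prod>j<k. M j (x j) (a j) (i j) (i' j)) = (if i = i' then 1 else 0)"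
    if "i \<in> idx k d" "i' \<in> idx k d" for i i'
  proof -
    have "(\<Sum>a\<in>PiE {..<k} A. \<Prod>j<k. M j (x j) (a j) (i j) (i' j)) = (\<Prod>j<k. \<Sum>b\<in>A j. M j (x j) b (i j) (i' j))"
      using finA by (subst prod_sum_PiE) auto
    also have "\<dots> = (\<Prod>j<k. (if i j = i' j then 1 else 0))"
      using that compl unfolding idx_def by (intro prod.cong refl) (auto simp: PiE_iff)
    also have "\<dots> = (if i = i' then 1 else 0)" unfolding prod_delta idx_eq[OF that] ..
    finally show ?thesis .
  qed
  have "(\<Sum>a\<in>PiE {..<k} A. ent_prob k d psi M x a)
     = Re (\<Sum>a\<in>PiE {..<k} A. \<Sum>i\<in>idx k d. \<Sum>i'\<in>idx k d. cnj (psi i) * (\<Prod>j<k. M j (x j) (a j) (i j) (i' j)) * psi i')"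
    unfolding ent_prob_def by (simp add: Re_sum)
  also have "(\<Sum>a\<in>PiE {..<k} A. \<Sum>i\<in>idx k d. \<Sum>i'\<in>idx k d. cnj (psi i) * (\<Prod>j<k. M j (x j) (a j) (i j) (i' j)) * psi i')
     = (\<Sum>i\<in>idx k d. \<Sum>i'\<in>idx k d. cnj (psi i) * (\<Sum>a\<in>PiE {..<k} A. \<Prod>j<k. M j (x j) (a j) (i j) (i' j)) * psi i')"
    by (simp add: sum.swap[of _ "PiE {..<k} A"] sum_distrib_left sum_distrib_right)
  also have "\<dots> = (\<Sum>i\<in>idx k d. \<Sum>i'\<in>idx k d. cnj (psi i) * (if i = i' then 1 else 0) * psi i')"
    by (intro sum.cong refl) (simp add: key)
  also have "\<dots> = (\<Sum>i\<in>idx k d. cnj (psi i) * psi i)"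
  proof (intro sum.cong refl)
    fix i assume "i \<in> idx k d"
    have "(\<Sum>i'\<in>idx k d. cnj (psi i) * (if i = i' then 1 else 0) * psi i') = (\<Sum>i'\<in>idx k d. if i = i' then cnj (psi i) * psi i' else 0)"
      by (rule sum.cong) auto
    also have "\<dots> = cnj (psi i) * psi i" using \<open>i \<in> idx k d\<close> finI by simp
    finally show "(\<Sum>i'\<in>idx k d. cnj (psi i) * (if i = i' then 1 else 0) * psi i') = cnj (psi i) * psi i" .
  qed
  also have "\<dots> = (\<Sum>i\<in>idx k d. complex_of_real ((cmod (psi i))\<^sup>2))"
    by (intro sum.cong refl) (metis complex_norm_square mult.commute of_real_power)
  finally show ?thesis by (simp add: Re_sum)
qed

lemma cnj_mult_self: "cnj z * z = complex_of_real ((cmod z)\<^sup>2)"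
proof -
  have "z * cnj z = complex_of_real ((cmod z)\<^sup>2)" using complex_norm_square[of z] by simp
  then show ?thesis by (simp add: mult.commute)
qed

lemma triple_swap:
  fixes a e :: "'i \<Rightarrow> complex" and b c :: "'l \<Rightarrow> 'i \<Rightarrow> complex"
  assumes "finite I" "finite L"
  shows "(\<Sum>i\<in>I. \<Sum>i'\<in>I. a i * (\<Sum>l\<in>L. b l i * c l i') * e i')
       = (\<Sum>l\<in>L. (\<Sum>i\<in>I. a i * b l i) * (\<Sum>i'\<in>I. c l i' * e i'))"
proof -
  have "(\<Sum>i\<in>I. \<Sum>i'\<in>I. a i * (\<Sum>l\<in>L. b l i * c l i') * e i')
      = (\<Sum>i\<in>I. \<Sum>i'\<in>I. \<Sum>l\<in>L. a i * b l i * (c l i' * e i'))"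
    by (simp add: sum_distrib_left sum_distrib_right mult.assoc)
  also have "\<dots> = (\<Sum>i\<in>I. \<Sum>l\<in>L. \<Sum>i'\<in>I. a i * b l i * (c l i' * e i'))"
    by (intro sum.cong refl) (rule sum.swap)
  also have "\<dots> = (\<Sum>l\<in>L. \<Sum>i\<in>I. \<Sum>i'\<in>I. a i * b l i * (c l i' * e i'))"
    by (rule sum.swap)
  also have "\<dots> = (\<Sum>l\<in>L. (\<Sum>i\<in>I. a i * b l i) * (\<Sum>i'\<in>I. c l i' * e i'))"
    by (simp add: sum_product)
  finally show ?thesis .
qed

lemma ent_prob_nonneg_gen:
  assumes psd: "\<forall>j<k. psd_mat (d j) (N j)"
  shows "0 \<le> Re (\<Sum>i\<in>idx k d. \<Sum>i'\<in>idx k d. cnj (psi i) * (\<Prod>j<k. N j (i j) (i' j)) * psi i')"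
proof -
  have ex: "\<exists>(n::nat) c. \<forall>r<d j. \<forall>s<d j. N j r s = (\<Sum>l<n. c l r * cnj (c l s))" if "j < k" for j
  proof -
    have "psd_mat (d j) (N j)" using psd that by simp
    then show ?thesis by (rule psd_decomp)
  qed
  have "\<forall>j. \<exists>nc::nat \<times> (nat \<Rightarrow> nat \<Rightarrow> complex). j < k \<longrightarrow> (\<forall>r<d j. \<forall>s<d j. N j r s = (\<Sum>l<fst nc. snd nc l r * cnj (snd nc l s)))"
  proof
    fix j show "\<exists>nc::nat \<times> (nat \<Rightarrow> nat \<Rightarrow> complex). j < k \<longrightarrow> (\<forall>r<d j. \<forall>s<d j. N j r s = (\<Sum>l<fst nc. snd nc l r * cnj (snd nc l s)))"
    proof (cases "j < k")
      case True
      then obtain n :: nat and c where H: "\<forall>r<d j. \<forall>s<d j. N j r s = (\<Sum>l<n. c l r * cnj (c l s))"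
        using ex by blast
      show ?thesis by (rule exI[of _ "(n, c)"]) (use H in simp)
    qed simp
  qed
  then obtain f :: "nat \<Rightarrow> nat \<times> (nat \<Rightarrow> nat \<Rightarrow> complex)" where f: "\<forall>j. j < k \<longrightarrow> (\<forall>r<d j. \<forall>s<d j. N j r s = (\<Sum>l<fst (f j). snd (f j) l r * cnj (snd (f j) l s)))"
    by (rule choice[THEN exE])
  define nn where "nn = (\<lambda>j. fst (f j))"
  define cc where "cc = (\<lambda>j. snd (f j))"
  have dec: "\<And>j. j < k \<Longrightarrow> \<forall>r<d j. \<forall>s<d j. N j r s = (\<Sum>l<nn j. cc j l r * cnj (cc j l s))"
    using f unfolding nn_def cc_def by blast
  define L where "L = PiE {..<k} (\<lambda>j. {..<nn j})"
  define g where "g = (\<lambda>l i. \<Prod>j<k. cc j (l j) (i j))"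
  have finI: "finite (idx k d)" unfolding idx_def by (simp add: finite_PiE)
  have finL: "finite L" unfolding L_def by (simp add: finite_PiE)
  have prodeq: "(\<Prod>j<k. N j (i j) (i' j)) = (\<Sum>l\<in>L. g l i * cnj (g l i'))"
    if "i \<in> idx k d" "i' \<in> idx k d" for i i'
  proof -
    have "(\<Prod>j<k. N j (i j) (i' j)) = (\<Prod>j<k. \<Sum>l<nn j. cc j l (i j) * cnj (cc j l (i' j)))"
      using that dec unfolding idx_def by (intro prod.cong refl) (auto simp: PiE_iff)
    also have "\<dots> = (\<Sum>l\<in>L. \<Prod>j<k. cc j (l j) (i j) * cnj (cc j (l j) (i' j)))"
      unfolding L_def by (subst prod_sum_PiE) auto
    also have "\<dots> = (\<Sum>l\<in>L. g l i * cnj (g l i'))"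
      unfolding g_def by (simp add: prod.distrib)
    finally show ?thesis .
  qed
  have "(\<Sum>i\<in>idx k d. \<Sum>i'\<in>idx k d. cnj (psi i) * (\<Prod>j<k. N j (i j) (i' j)) * psi i')
     = (\<Sum>i\<in>idx k d. \<Sum>i'\<in>idx k d. cnj (psi i) * (\<Sum>l\<in>L. g l i * cnj (g l i')) * psi i')"
    by (intro sum.cong refl) (simp add: prodeq)
  also have "\<dots> = (\<Sum>l\<in>L. (\<Sum>i\<in>idx k d. cnj (psi i) * g l i) * (\<Sum>i'\<in>idx k d. cnj (g l i') * psi i'))"
    by (rule triple_swap[OF finI finL])
  also have "\<dots> = (\<Sum>l\<in>L. complex_of_real ((cmod (\<Sum>i'\<in>idx k d. cnj (g l i') * psi i'))\<^sup>2))"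
  proof (intro sum.cong refl)
    fix l
    have "(\<Sum>i\<in>idx k d. cnj (psi i) * g l i) = cnj (\<Sum>i'\<in>idx k d. cnj (g l i') * psi i')"
      by (simp add: mult.commute)
    then show "(\<Sum>i\<in>idx k d. cnj (psi i) * g l i) * (\<Sum>i'\<in>idx k d. cnj (g l i') * psi i')
       = complex_of_real ((cmod (\<Sum>i'\<in>idx k d. cnj (g l i') * psi i'))\<^sup>2)"
      by (simp only: cnj_mult_self)
  qed
  finally show ?thesis by (simp add: Re_sum sum_nonneg)
qed



definition Wf :: "nat \<Rightarrow> (nat \<Rightarrow> 'a set) \<Rightarrow> ((nat \<Rightarrow> 'x) \<Rightarrow> (nat \<Rightarrow> 'a) \<Rightarrow> bool) \<Rightarrow> (nat \<Rightarrow> nat)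
    \<Rightarrow> ((nat \<Rightarrow> nat) \<Rightarrow> complex) \<Rightarrow> (nat \<Rightarrow> 'x \<Rightarrow> 'a \<Rightarrow> nat \<Rightarrow> nat \<Rightarrow> complex) \<Rightarrow> (nat \<Rightarrow> 'x) \<Rightarrow> real" where
  "Wf k A V d psi M x = (\<Sum>a\<in>PiE {..<k} A. if V x a then ent_prob k d psi M x a else 0)"

lemma ent_win_Wf: "ent_win k X A mu V d psi M = (\<Sum>x\<in>PiE {..<k} X. mu x * Wf k A V d psi M x)"
  unfolding ent_win_def Wf_def ..

lemma ent_prob_nonneg:
  assumes S: "ent_strategy k X A d psi M" and x: "x \<in> PiE {..<k} X" and a: "a \<in> PiE {..<k} A"
  shows "0 \<le> ent_prob k d psi M x a"
proof -
  have "\<forall>j<k. psd_mat (d j) (M j (x j) (a j))"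
    using S x a unfolding ent_strategy_def povm_def by (auto simp: PiE_iff)
  then show ?thesis unfolding ent_prob_def by (rule ent_prob_nonneg_gen)
qed

lemma ent_prob_sum1:
  assumes S: "ent_strategy k X A d psi M" and x: "x \<in> PiE {..<k} X" and finA: "\<forall>j<k. finite (A j)"
  shows "(\<Sum>a\<in>PiE {..<k} A. ent_prob k d psi M x a) = 1"
proof -
  have "\<forall>j<k. \<forall>r<d j. \<forall>c<d j. (\<Sum>a\<in>A j. M j (x j) a r c) = (if r = c then 1 else 0)"
    using S x unfolding ent_strategy_def povm_def by (auto simp: PiE_iff)
  then have "(\<Sum>a\<in>PiE {..<k} A. ent_prob k d psi M x a) = (\<Sum>i\<in>idx k d. (cmod (psi i))\<^sup>2)"
    using finA by (intro ent_prob_sum) auto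
  also have "\<dots> = 1" using S unfolding ent_strategy_def by simp
  finally show ?thesis .
qed

lemma Wf_bounds:
  assumes S: "ent_strategy k X A d psi M" and x: "x \<in> PiE {..<k} X" and finA: "\<forall>j<k. finite (A j)"
  shows "0 \<le> Wf k A V d psi M x" "Wf k A V d psi M x \<le> 1"
proof -
  have nn: "\<And>a. a \<in> PiE {..<k} A \<Longrightarrow> 0 \<le> ent_prob k d psi M x a"
    using ent_prob_nonneg[OF S x] .
  show "0 \<le> Wf k A V d psi M x" unfolding Wf_def by (intro sum_nonneg) (simp add: nn)
  have "Wf k A V d psi M x \<le> (\<Sum>a\<in>PiE {..<k} A. ent_prob k d psi M x a)"
    unfolding Wf_def by (intro sum_mono) (simp add: nn)
  also have "\<dots> = 1" using ent_prob_sum1[OF S x finA] .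
  finally show "Wf k A V d psi M x \<le> 1" .
qed

lemma ent_win_le1:
  assumes S: "ent_strategy k X A d psi M" and finA: "\<forall>j<k. finite (A j)"
    and mu: "\<forall>x\<in>PiE {..<k} X. 0 \<le> mu x" "(\<Sum>x\<in>PiE {..<k} X. mu x) = 1"
  shows "ent_win k X A mu V d psi M \<le> 1"
proof -
  have "ent_win k X A mu V d psi M \<le> (\<Sum>x\<in>PiE {..<k} X. mu x * 1)"
    unfolding ent_win_Wf using Wf_bounds[OF S _ finA] mu(1)
    by (intro sum_mono mult_left_mono) auto
  then show ?thesis using mu(2) by simp
qed

lemma strategy_exists:
  fixes X :: "nat \<Rightarrow> 'x set" and A :: "nat \<Rightarrow> 'a set"
  assumes A: "\<forall>j<k. A j \<noteq> {}" and finA: "\<forall>j<k. finite (A j)"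
  shows "\<exists>d psi M. ent_strategy k X A d psi M"
proof -
  define a0 where "a0 = (\<lambda>j. SOME a. a \<in> A j)"
  have a0: "a0 j \<in> A j" if "j < k" for j using A that unfolding a0_def by (simp add: some_in_eq)
  define M :: "nat \<Rightarrow> 'x \<Rightarrow> 'a \<Rightarrow> nat \<Rightarrow> nat \<Rightarrow> complex"
    where "M = (\<lambda>j x a r c. if a = a0 j then 1 else 0)"
  have idx1: "idx k (\<lambda>_. 1) = {\<lambda>j\<in>{..<k}. 0}"
  proof -
    have "idx k (\<lambda>_. 1) = PiE {..<k} (\<lambda>j. {0})" unfolding idx_def by (simp add: lessThan_Suc)
    also have "\<dots> = {\<lambda>j\<in>{..<k}. 0}" by (simp add: PiE_singleton)
    finally show ?thesis .
  qed
  have psd: "psd_mat 1 (M j x a)" for j x a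
  proof -
    have "0 \<le> Re (cnj (v 0) * M j x a 0 0 * v 0)" for v :: "nat \<Rightarrow> complex"
    proof -
      have "cnj (v 0) * M j x a 0 0 * v 0 = M j x a 0 0 * complex_of_real ((cmod (v 0))\<^sup>2)"
        using cnj_mult_self[of "v 0"] by (simp add: algebra_simps)
      then show ?thesis unfolding M_def by simp
    qed
    then show ?thesis unfolding psd_mat_def M_def by simp
  qed
  have povm: "povm 1 (X j) (A j) (M j)" if "j < k" for j
  proof -
    have "(\<Sum>a\<in>A j. M j x a 0 0) = 1" for x
      unfolding M_def using a0[OF that] finA that by simp
    then show ?thesis unfolding povm_def using psd by simp
  qed
  have "ent_strategy k X A (\<lambda>_. 1) (\<lambda>_. 1) M"
    unfolding ent_strategy_def idx1 using povm by simp
  then show ?thesis by blast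
qed



lemma tv_bound:
  fixes nu mu W :: "'b \<Rightarrow> real"
  assumes fin: "finite S" and W: "\<forall>x\<in>S. 0 \<le> W x \<and> W x \<le> 1"
    and nu: "(\<Sum>x\<in>S. nu x) = 1" and mu: "(\<Sum>x\<in>S. mu x) = 1"
  shows "\<bar>(\<Sum>x\<in>S. nu x * W x) - (\<Sum>x\<in>S. mu x * W x)\<bar> \<le> (1/2) * (\<Sum>x\<in>S. \<bar>nu x - mu x\<bar>)"
proof -
  have z: "(\<Sum>x\<in>S. (nu x - mu x) * (1/2)) = 0"
    using nu mu by (simp add: sum_subtractf sum_divide_distrib[symmetric])
  have "(\<Sum>x\<in>S. nu x * W x) - (\<Sum>x\<in>S. mu x * W x) = (\<Sum>x\<in>S. (nu x - mu x) * W x)"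
    by (simp add: sum_subtractf left_diff_distrib)
  also have "\<dots> = (\<Sum>x\<in>S. (nu x - mu x) * W x) - (\<Sum>x\<in>S. (nu x - mu x) * (1/2))" using z by simp
  also have "\<dots> = (\<Sum>x\<in>S. (nu x - mu x) * (W x - 1/2))"
    by (simp add: sum_subtractf right_diff_distrib)
  finally have e: "(\<Sum>x\<in>S. nu x * W x) - (\<Sum>x\<in>S. mu x * W x) = (\<Sum>x\<in>S. (nu x - mu x) * (W x - 1/2))" .
  have "\<bar>\<Sum>x\<in>S. (nu x - mu x) * (W x - 1/2)\<bar> \<le> (\<Sum>x\<in>S. \<bar>(nu x - mu x) * (W x - 1/2)\<bar>)"
    by (rule sum_abs)
  also have "\<dots> \<le> (\<Sum>x\<in>S. \<bar>nu x - mu x\<bar> * (1/2))"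
  proof (intro sum_mono)
    fix x assume "x \<in> S"
    then have "0 \<le> W x" "W x \<le> 1" using W by auto
    then have "\<bar>W x - 1/2\<bar> \<le> 1/2" by linarith
    then show "\<bar>(nu x - mu x) * (W x - 1/2)\<bar> \<le> \<bar>nu x - mu x\<bar> * (1/2)"
      unfolding abs_mult by (rule mult_left_mono) auto
  qed
  also have "\<dots> = (1/2) * (\<Sum>x\<in>S. \<bar>nu x - mu x\<bar>)" by (simp add: sum_divide_distrib[symmetric])
  finally show ?thesis unfolding e .
qed

lemma prod_diff_one:
  fixes f g :: "nat \<Rightarrow> real"
  assumes "finite S" "j \<in> S" "\<forall>i\<in>S. i \<noteq> j \<longrightarrow> f i = g i"
  shows "prod f S - prod g S = (f j - g j) * prod f (S - {j})"
proof -
  have "prod g (S - {j}) = prod f (S - {j})" using assms(3) by (intro prod.cong) auto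
  then show ?thesis using prod.remove[OF assms(1,2), of f] prod.remove[OF assms(1,2), of g]
    by (simp add: algebra_simps)
qed

lemma prod_tv:
  fixes p q :: "nat \<Rightarrow> 'b \<Rightarrow> real"
  assumes fin: "\<forall>j<k. finite (X j)"
    and pn: "\<forall>j<k. \<forall>y\<in>X j. 0 \<le> p j y" and qn: "\<forall>j<k. \<forall>y\<in>X j. 0 \<le> q j y"
    and ps: "\<forall>j<k. (\<Sum>y\<in>X j. p j y) = 1" and qs: "\<forall>j<k. (\<Sum>y\<in>X j. q j y) = 1"
  shows "(\<Sum>x\<in>PiE {..<k} X. \<bar>(\<Prod>j<k. p j (x j)) - (\<Prod>j<k. q j (x j))\<bar>)
       \<le> (\<Sum>j<k. \<Sum>y\<in>X j. \<bar>p j y - q j y\<bar>)"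
proof -
  define T where "T = (\<lambda>x m. \<Prod>i<k. (if i < m then q i (x i) else p i (x i)))"
  define h where "h = (\<lambda>j i y. if i = j then \<bar>p i y - q i y\<bar> else if i < j then q i y else p i y)"
  have T0: "T x 0 = (\<Prod>j<k. p j (x j))" for x unfolding T_def by simp
  have Tk: "T x k = (\<Prod>j<k. q j (x j))" for x unfolding T_def by (intro prod.cong) auto
  have step: "\<bar>T x j - T x (Suc j)\<bar> = (\<Prod>i<k. h j i (x i))" if x: "x \<in> PiE {..<k} X" and j: "j < k" for x j
  proof -
    have "T x j - T x (Suc j) = ((if j < j then q j (x j) else p j (x j)) - (if j < Suc j then q j (x j) else p j (x j))) * (\<Prod>i\<in>{..<k} - {j}. (if i < j then q i (x i) else p i (x i)))"
      unfolding T_def by (rule prod_diff_one) (use j in auto)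
    then have "T x j - T x (Suc j) = (p j (x j) - q j (x j)) * (\<Prod>i\<in>{..<k} - {j}. (if i < j then q i (x i) else p i (x i)))"
      by simp
    moreover have "(\<Prod>i<k. h j i (x i)) = \<bar>p j (x j) - q j (x j)\<bar> * (\<Prod>i\<in>{..<k} - {j}. (if i < j then q i (x i) else p i (x i)))"
    proof -
      have "(\<Prod>i<k. h j i (x i)) = h j j (x j) * (\<Prod>i\<in>{..<k} - {j}. h j i (x i))"
        using j by (intro prod.remove) auto
      also have "(\<Prod>i\<in>{..<k} - {j}. h j i (x i)) = (\<Prod>i\<in>{..<k} - {j}. (if i < j then q i (x i) else p i (x i)))"
        unfolding h_def by (intro prod.cong) auto
      finally show ?thesis unfolding h_def by simp
    qed
    moreover have "0 \<le> (\<Prod>i\<in>{..<k} - {j}. (if i < j then q i (x i) else p i (x i)))"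
      using x pn qn by (intro prod_nonneg) (auto simp: PiE_iff)
    ultimately show ?thesis by (simp add: abs_mult)
  qed
  have sumh: "(\<Sum>x\<in>PiE {..<k} X. \<Prod>i<k. h j i (x i)) = (\<Sum>y\<in>X j. \<bar>p j y - q j y\<bar>)" if j: "j < k" for j
  proof -
    have "(\<Sum>x\<in>PiE {..<k} X. \<Prod>i<k. h j i (x i)) = (\<Prod>i<k. \<Sum>y\<in>X i. h j i y)"
      using fin by (subst prod_sum_PiE) auto
    also have "\<dots> = (\<Sum>y\<in>X j. h j j y) * (\<Prod>i\<in>{..<k} - {j}. \<Sum>y\<in>X i. h j i y)"
      using j by (intro prod.remove) auto
    also have "(\<Prod>i\<in>{..<k} - {j}. \<Sum>y\<in>X i. h j i y) = 1"
    proof (rule prod.neutral, intro ballI)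
      fix i assume i: "i \<in> {..<k} - {j}"
      show "(\<Sum>y\<in>X i. h j i y) = 1"
      proof (cases "i < j")
        case True
        then have "(\<Sum>y\<in>X i. h j i y) = (\<Sum>y\<in>X i. q i y)" unfolding h_def by (intro sum.cong) auto
        then show ?thesis using qs i by simp
      next
        case False
        then have "(\<Sum>y\<in>X i. h j i y) = (\<Sum>y\<in>X i. p i y)" using i unfolding h_def by (intro sum.cong) auto
        then show ?thesis using ps i by simp
      qed
    qed
    finally show ?thesis unfolding h_def by simp
  qed
  have "(\<Sum>x\<in>PiE {..<k} X. \<bar>(\<Prod>j<k. p j (x j)) - (\<Prod>j<k. q j (x j))\<bar>)
      = (\<Sum>x\<in>PiE {..<k} X. \<bar>\<Sum>j<k. T x j - T x (Suc j)\<bar>)"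
  proof (intro sum.cong refl)
    fix x
    have "(\<Sum>j<k. T x j - T x (Suc j)) = - (\<Sum>j<k. T x (Suc j) - T x j)"
      by (simp add: sum_negf[symmetric])
    also have "\<dots> = T x 0 - T x k" by (simp add: sum_lessThan_telescope)
    finally show "\<bar>(\<Prod>j<k. p j (x j)) - (\<Prod>j<k. q j (x j))\<bar> = \<bar>\<Sum>j<k. T x j - T x (Suc j)\<bar>"
      using T0 Tk by simp
  qed
  also have "\<dots> \<le> (\<Sum>x\<in>PiE {..<k} X. \<Sum>j<k. \<bar>T x j - T x (Suc j)\<bar>)"
    by (intro sum_mono sum_abs)
  also have "\<dots> = (\<Sum>x\<in>PiE {..<k} X. \<Sum>j<k. \<Prod>i<k. h j i (x i))"
    by (intro sum.cong refl) (simp add: step)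
  also have "\<dots> = (\<Sum>j<k. \<Sum>x\<in>PiE {..<k} X. \<Prod>i<k. h j i (x i))"
    by (rule sum.swap)
  also have "\<dots> = (\<Sum>j<k. \<Sum>y\<in>X j. \<bar>p j y - q j y\<bar>)"
    by (intro sum.cong refl) (simp add: sumh)
  finally show ?thesis .
qed



definition Fm :: "nat \<Rightarrow> (nat \<Rightarrow> 'y \<Rightarrow> 'x) \<Rightarrow> (nat \<Rightarrow> 'y) \<Rightarrow> nat \<Rightarrow> 'x" where
  "Fm k f y = (\<lambda>j\<in>{..<k}. f j (y j))"

lemma fib_PiE:
  assumes x: "x \<in> PiE {..<k} X"
  shows "{y \<in> PiE {..<k} X'. Fm k f y = x} = PiE {..<k} (\<lambda>j. {y \<in> X' j. f j y = x j})"
proof (intro set_eqI iffI)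
  fix y assume "y \<in> {y \<in> PiE {..<k} X'. Fm k f y = x}"
  then have y: "y \<in> PiE {..<k} X'" and e: "Fm k f y = x" by auto
  have "f j (y j) = x j" if "j < k" for j using e that unfolding Fm_def by (metis lessThan_iff restrict_apply')
  then show "y \<in> PiE {..<k} (\<lambda>j. {y \<in> X' j. f j y = x j})" using y by (auto simp: PiE_iff)
next
  fix y assume y: "y \<in> PiE {..<k} (\<lambda>j. {y \<in> X' j. f j y = x j})"
  then have y': "y \<in> PiE {..<k} X'" by (auto simp: PiE_iff)
  have "Fm k f y = x"
  proof (rule PiE_ext[of _ "{..<k}" X])
    show "Fm k f y \<in> PiE {..<k} X" using x y unfolding Fm_def by (auto simp: PiE_iff)
    show "x \<in> PiE {..<k} X" by fact
    show "Fm k f y j = x j" if "j \<in> {..<k}" for j using y that unfolding Fm_def by (auto simp: PiE_iff)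
  qed
  then show "y \<in> {y \<in> PiE {..<k} X'. Fm k f y = x}" using y' by auto
qed

lemma regroup:
  fixes h' :: "(nat \<Rightarrow> 'y) \<Rightarrow> real" and h :: "(nat \<Rightarrow> 'x) \<Rightarrow> real"
  assumes finX: "\<forall>j<k. finite (X j)" and finX': "\<forall>j<k. finite (X' j) \<and> X' j \<noteq> {}"
    and f_maps: "\<forall>j<k. f j ` X' j \<subseteq> X j"
    and H: "\<forall>x\<in>PiE {..<k} X. (\<Sum>y\<in>{y \<in> PiE {..<k} X'. Fm k f y = x}. h' y)
               = real (card {y \<in> PiE {..<k} X'. Fm k f y = x}) * h x"
  shows "(\<Sum>y\<in>PiE {..<k} X'. 1 / real (card (PiE {..<k} X')) * h' y)
       = (\<Sum>x\<in>PiE {..<k} X. (\<Prod>j<k. push_unif (X' j) (f j) (x j)) * h x)"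
proof -
  define N where "N = real (card (PiE {..<k} X'))"
  have N: "N = (\<Prod>j<k. real (card (X' j)))" unfolding N_def by (simp add: card_PiE)
  have finPX: "finite (PiE {..<k} X)" using finX by (intro finite_PiE) auto
  have finPX': "finite (PiE {..<k} X')" using finX' by (intro finite_PiE) auto
  have img: "Fm k f ` PiE {..<k} X' \<subseteq> PiE {..<k} X"
    using f_maps unfolding Fm_def by (auto simp: PiE_iff image_subset_iff)
  have nu: "(\<Prod>j<k. push_unif (X' j) (f j) (x j)) = real (card {y \<in> PiE {..<k} X'. Fm k f y = x}) / N"
    if x: "x \<in> PiE {..<k} X" for x
  proof -
    have "(\<Prod>j<k. push_unif (X' j) (f j) (x j)) = (\<Prod>j<k. real (card {y \<in> X' j. f j y = x j})) / (\<Prod>j<k. real (card (X' j)))"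
      unfolding push_unif_def by (simp add: prod_dividef)
    also have "(\<Prod>j<k. real (card {y \<in> X' j. f j y = x j})) = real (card {y \<in> PiE {..<k} X'. Fm k f y = x})"
      unfolding fib_PiE[OF x] by (simp add: card_PiE)
    finally show ?thesis unfolding N .
  qed
  have "(\<Sum>y\<in>PiE {..<k} X'. h' y) = (\<Sum>x\<in>PiE {..<k} X. \<Sum>y\<in>{y \<in> PiE {..<k} X'. Fm k f y = x}. h' y)"
    by (rule sum.group[symmetric, OF finPX' finPX img])
  also have "\<dots> = (\<Sum>x\<in>PiE {..<k} X. real (card {y \<in> PiE {..<k} X'. Fm k f y = x}) * h x)"
    using H by (intro sum.cong refl) auto
  finally have e: "(\<Sum>y\<in>PiE {..<k} X'. h' y) = (\<Sum>x\<in>PiE {..<k} X. real (card {y \<in> PiE {..<k} X'. Fm k f y = x}) * h x)" .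
  have "(\<Sum>y\<in>PiE {..<k} X'. 1 / N * h' y) = 1 / N * (\<Sum>y\<in>PiE {..<k} X'. h' y)"
    by (simp add: sum_distrib_left)
  also have "\<dots> = (\<Sum>x\<in>PiE {..<k} X. real (card {y \<in> PiE {..<k} X'. Fm k f y = x}) / N * h x)"
    unfolding e by (simp add: sum_distrib_left)
  also have "\<dots> = (\<Sum>x\<in>PiE {..<k} X. (\<Prod>j<k. push_unif (X' j) (f j) (x j)) * h x)"
    by (intro sum.cong refl) (simp add: nu)
  finally show ?thesis unfolding N_def .
qed



lemma dir1_strategy:
  assumes S: "ent_strategy k X A d psi M" and f_maps: "\<forall>j<k. f j ` X' j \<subseteq> X j"
  shows "ent_strategy k X' A d psi (\<lambda>j y. M j (f j y))"
proof -
  have "povm (d j) (X' j) (A j) (\<lambda>y. M j (f j y))" if j: "j < k" for j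
  proof -
    have p: "povm (d j) (X j) (A j) (M j)" using S j unfolding ent_strategy_def by blast
    have "f j y \<in> X j" if "y \<in> X' j" for y using f_maps j that by blast
    then show ?thesis using p unfolding povm_def by blast
  qed
  then show ?thesis using S unfolding ent_strategy_def by blast
qed

lemma dir1_Wf:
  "Wf k A (\<lambda>y a. V (Fm k f y) a) d psi (\<lambda>j y. M j (f j y)) y = Wf k A V d psi M (Fm k f y)"
proof -
  have e: "ent_prob k d psi (\<lambda>j y. M j (f j y)) y a = ent_prob k d psi M (Fm k f y) a" for a
    unfolding ent_prob_def Fm_def by (intro arg_cong[where f=Re] sum.cong refl arg_cong2[where f="(*)"] prod.cong) auto
  show ?thesis unfolding Wf_def e ..
qed

lemma psd_avg:
  assumes fin: "finite S" and ne: "S \<noteq> {}" and P: "\<forall>y\<in>S. psd_mat d (N y)"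
  shows "psd_mat d (\<lambda>r c. (\<Sum>y\<in>S. N y r c) / of_nat (card S))"
proof -
  have cpos: "0 < card S" using fin ne by (simp add: card_gt_0_iff)
  have herm: "(\<Sum>y\<in>S. N y r c) / of_nat (card S) = cnj ((\<Sum>y\<in>S. N y c r) / of_nat (card S))"
    if "r < d" "c < d" for r c
  proof -
    have "(\<Sum>y\<in>S. N y r c) = (\<Sum>y\<in>S. cnj (N y c r))"
      using P that unfolding psd_mat_def by (intro sum.cong refl) blast
    then show ?thesis by simp
  qed
  have quad: "0 \<le> Re (\<Sum>r<d. \<Sum>c<d. cnj (v r) * ((\<Sum>y\<in>S. N y r c) / of_nat (card S)) * v c)" for v
  proof -
    have "(\<Sum>r<d. \<Sum>c<d. cnj (v r) * ((\<Sum>y\<in>S. N y r c) / of_nat (card S)) * v c)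
        = (\<Sum>y\<in>S. qf d (N y) v) / of_nat (card S)"
      unfolding qf_def
      by (simp add: sum_divide_distrib sum_distrib_left sum_distrib_right sum.swap[of _ S] mult.assoc)
    moreover have "0 \<le> Re (\<Sum>y\<in>S. qf d (N y) v)"
      using P psd_qf unfolding Re_sum by (intro sum_nonneg) blast
    ultimately show ?thesis using cpos by (simp add: Re_divide_of_nat)
  qed
  show ?thesis unfolding psd_mat_def using herm quad by blast
qed

lemma ent_prob_avg:
  fixes M' :: "nat \<Rightarrow> 'y \<Rightarrow> 'a \<Rightarrow> nat \<Rightarrow> nat \<Rightarrow> complex" and Mt :: "nat \<Rightarrow> 'x \<Rightarrow> 'a \<Rightarrow> nat \<Rightarrow> nat \<Rightarrow> complex"
  assumes fin: "\<forall>j<k. finite (C j)" and ne: "\<forall>j<k. C j \<noteq> {}"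
    and Mt: "\<forall>j<k. \<forall>r c. Mt j (x j) (a j) r c = (\<Sum>y\<in>C j. M' j y (a j) r c) / of_nat (card (C j))"
  shows "(\<Sum>y\<in>PiE {..<k} C. ent_prob k d psi M' y a) = real (card (PiE {..<k} C)) * ent_prob k d psi Mt x a"
proof -
  define K where "K = card (PiE {..<k} C)"
  have K: "K = (\<Prod>j<k. card (C j))" unfolding K_def by (simp add: card_PiE)
  have Kpos: "0 < K" unfolding K using fin ne by (simp add: card_gt_0_iff)
  have finP: "finite (PiE {..<k} C)" using fin by (intro finite_PiE) auto
  define P where "P = (\<lambda>y (i::nat \<Rightarrow> nat) (i'::nat\<Rightarrow>nat). \<Prod>j<k. M' j (y j) (a j) (i j) (i' j))"
  have prodeq: "(\<Prod>j<k. Mt j (x j) (a j) (i j) (i' j)) = (\<Sum>y\<in>PiE {..<k} C. P y i i') / of_nat K" for i i'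
  proof -
    have "(\<Prod>j<k. Mt j (x j) (a j) (i j) (i' j)) = (\<Prod>j<k. (\<Sum>y\<in>C j. M' j y (a j) (i j) (i' j)) / of_nat (card (C j)))"
      using Mt by (intro prod.cong refl) auto
    also have "\<dots> = (\<Prod>j<k. \<Sum>y\<in>C j. M' j y (a j) (i j) (i' j)) / (\<Prod>j<k. of_nat (card (C j)))"
      by (simp add: prod_dividef)
    also have "(\<Prod>j<k. \<Sum>y\<in>C j. M' j y (a j) (i j) (i' j)) = (\<Sum>y\<in>PiE {..<k} C. P y i i')"
      unfolding P_def using fin by (subst prod_sum_PiE) auto
    also have "(\<Prod>j<k. (of_nat (card (C j)) :: complex)) = of_nat K" unfolding K by simp
    finally show ?thesis .
  qed
  define Z where "Z = (\<Sum>i\<in>idx k d. \<Sum>i'\<in>idx k d. cnj (psi i) * (\<Sum>y\<in>PiE {..<k} C. P y i i') * psi i')"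
  have "ent_prob k d psi Mt x a = Re ((\<Sum>i\<in>idx k d. \<Sum>i'\<in>idx k d. cnj (psi i) * (\<Sum>y\<in>PiE {..<k} C. P y i i') * psi i') / of_nat K)"
  proof -
    have "(\<Sum>i\<in>idx k d. \<Sum>i'\<in>idx k d. cnj (psi i) * ((\<Sum>y\<in>PiE {..<k} C. P y i i') / of_nat K) * psi i')
       = (\<Sum>i\<in>idx k d. \<Sum>i'\<in>idx k d. cnj (psi i) * (\<Sum>y\<in>PiE {..<k} C. P y i i') * psi i') / of_nat K"
    proof -
      have "(\<Sum>i\<in>idx k d. \<Sum>i'\<in>idx k d. cnj (psi i) * ((\<Sum>y\<in>PiE {..<k} C. P y i i') / of_nat K) * psi i')
         = (\<Sum>i\<in>idx k d. \<Sum>i'\<in>idx k d. cnj (psi i) * (\<Sum>y\<in>PiE {..<k} C. P y i i') * psi i' / of_nat K)"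
        by (intro sum.cong refl) (simp only: times_divide_eq_right divide_mult_eq times_divide_eq_left)
      also have "\<dots> = (\<Sum>i\<in>idx k d. \<Sum>i'\<in>idx k d. cnj (psi i) * (\<Sum>y\<in>PiE {..<k} C. P y i i') * psi i') / of_nat K"
        by (simp only: sum_divide_distrib)
      finally show ?thesis .
    qed
    then show ?thesis unfolding ent_prob_def prodeq by simp
  qed
  then have ep: "real K * ent_prob k d psi Mt x a = Re Z"
    unfolding Z_def using Kpos by (simp add: Re_divide_of_nat)
  have "Z = (\<Sum>y\<in>PiE {..<k} C. \<Sum>i\<in>idx k d. \<Sum>i'\<in>idx k d. cnj (psi i) * P y i i' * psi i')"
  proof -
    have "Z = (\<Sum>i\<in>idx k d. \<Sum>i'\<in>idx k d. \<Sum>y\<in>PiE {..<k} C. cnj (psi i) * P y i i' * psi i')"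
      unfolding Z_def by (simp add: sum_distrib_left sum_distrib_right)
    also have "\<dots> = (\<Sum>i\<in>idx k d. \<Sum>y\<in>PiE {..<k} C. \<Sum>i'\<in>idx k d. cnj (psi i) * P y i i' * psi i')"
      by (intro sum.cong refl) (rule sum.swap)
    also have "\<dots> = (\<Sum>y\<in>PiE {..<k} C. \<Sum>i\<in>idx k d. \<Sum>i'\<in>idx k d. cnj (psi i) * P y i i' * psi i')"
      by (rule sum.swap)
    finally show ?thesis .
  qed
  then have "Re Z = (\<Sum>y\<in>PiE {..<k} C. ent_prob k d psi M' y a)"
    unfolding ent_prob_def P_def by (simp add: Re_sum)
  then show ?thesis using ep unfolding K_def by simp
qed

lemma dir2:
  fixes M' :: "nat \<Rightarrow> 'y \<Rightarrow> 'a \<Rightarrow> nat \<Rightarrow> nat \<Rightarrow> complex" and f :: "nat \<Rightarrow> 'y \<Rightarrow> 'x"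
    and X :: "nat \<Rightarrow> 'x set"
  assumes S': "ent_strategy k X' A d psi M'"
    and finX': "\<forall>j<k. finite (X' j) \<and> X' j \<noteq> {}"
    and finA: "\<forall>j<k. finite (A j)"
  shows "\<exists>Mt. ent_strategy k X A d psi Mt \<and>
     (\<forall>x\<in>PiE {..<k} X. (\<Sum>y\<in>{y \<in> PiE {..<k} X'. Fm k f y = x}. Wf k A (\<lambda>y a. V (Fm k f y) a) d psi M' y)
        = real (card {y \<in> PiE {..<k} X'. Fm k f y = x}) * Wf k A V d psi Mt x)"
proof -
  define C where "C = (\<lambda>j x. {y \<in> X' j. f j y = x})"
  define Mt :: "nat \<Rightarrow> 'x \<Rightarrow> 'a \<Rightarrow> nat \<Rightarrow> nat \<Rightarrow> complex" where
    "Mt = (\<lambda>j x a r c. if C j x = {} then M' j (SOME y. y \<in> X' j) a r c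
              else (\<Sum>y\<in>C j x. M' j y a r c) / of_nat (card (C j x)))"
  have finC: "finite (C j x)" if "j < k" for j x using finX' that unfolding C_def by auto
  have CX: "C j x \<subseteq> X' j" for j x unfolding C_def by auto
  have povm': "povm (d j) (X' j) (A j) (M' j)" if "j < k" for j using S' that unfolding ent_strategy_def by blast
  have povm: "povm (d j) (X j) (A j) (Mt j)" if j: "j < k" for j
  proof -
    have "(\<forall>a\<in>A j. psd_mat (d j) (Mt j x a)) \<and>
        (\<forall>r<d j. \<forall>c<d j. (\<Sum>a\<in>A j. Mt j x a r c) = (if r = c then 1 else 0))" for x
    proof (cases "C j x = {}")
      case True
      have y0: "(SOME y. y \<in> X' j) \<in> X' j" using finX' j by (simp add: some_in_eq)
      have "Mt j x = M' j (SOME y. y \<in> X' j)" unfolding Mt_def using True by (intro ext) simp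
      then show ?thesis using povm'[OF j] y0 unfolding povm_def by simp
    next
      case False
      have eq: "Mt j x a = (\<lambda>r c. (\<Sum>y\<in>C j x. M' j y a r c) / of_nat (card (C j x)))" for a
        unfolding Mt_def using False by (intro ext) simp
      have psd: "psd_mat (d j) (Mt j x a)" if "a \<in> A j" for a
        unfolding eq using finC[OF j] False povm'[OF j] CX that unfolding povm_def
        by (intro psd_avg) blast+
      have sum1: "(\<Sum>a\<in>A j. Mt j x a r c) = (if r = c then 1 else 0)" if "r < d j" "c < d j" for r c
      proof -
        have "(\<Sum>a\<in>A j. Mt j x a r c) = (\<Sum>y\<in>C j x. \<Sum>a\<in>A j. M' j y a r c) / of_nat (card (C j x))"
          unfolding eq by (simp add: sum_divide_distrib[symmetric] sum.swap[of _ "A j"])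
        also have "\<dots> = (\<Sum>y\<in>C j x. (if r = c then 1 else 0)) / of_nat (card (C j x))"
          using povm'[OF j] CX that unfolding povm_def by (intro arg_cong2[where f="(/)"] sum.cong refl) blast+
        also have "\<dots> = (if r = c then 1 else 0)" using False finC[OF j] by simp
        finally show ?thesis .
      qed
      show ?thesis using psd sum1 by blast
    qed
    then show ?thesis unfolding povm_def by blast
  qed
  have S: "ent_strategy k X A d psi Mt" using S' povm unfolding ent_strategy_def by blast
  have W: "(\<Sum>y\<in>{y \<in> PiE {..<k} X'. Fm k f y = x}. Wf k A (\<lambda>y a. V (Fm k f y) a) d psi M' y)
        = real (card {y \<in> PiE {..<k} X'. Fm k f y = x}) * Wf k A V d psi Mt x"
    if x: "x \<in> PiE {..<k} X" for x
  proof -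
    define F where "F = {y \<in> PiE {..<k} X'. Fm k f y = x}"
    have F: "F = PiE {..<k} (\<lambda>j. C j (x j))" unfolding F_def C_def by (rule fib_PiE[OF x])
    have finF: "finite F" unfolding F using finC by (intro finite_PiE) auto
    have pe: "(\<Sum>y\<in>F. ent_prob k d psi M' y a) = real (card F) * ent_prob k d psi Mt x a" for a
    proof (cases "F = {}")
      case True then show ?thesis by simp
    next
      case False
      then have ne: "\<forall>j<k. C j (x j) \<noteq> {}" unfolding F by (auto simp: PiE_eq_empty_iff)
      have "\<forall>j<k. \<forall>r c. Mt j (x j) (a j) r c = (\<Sum>y\<in>C j (x j). M' j y (a j) r c) / of_nat (card (C j (x j)))"
        using ne unfolding Mt_def by simp
      then show ?thesis unfolding F using ent_prob_avg[of k "\<lambda>j. C j (x j)" Mt x a M' d psi] finC ne by simp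
    qed
    have "(\<Sum>y\<in>F. Wf k A (\<lambda>y a. V (Fm k f y) a) d psi M' y)
        = (\<Sum>y\<in>F. \<Sum>a\<in>PiE {..<k} A. if V x a then ent_prob k d psi M' y a else 0)"
      unfolding Wf_def F_def by (intro sum.cong refl) auto
    also have "\<dots> = (\<Sum>a\<in>PiE {..<k} A. if V x a then (\<Sum>y\<in>F. ent_prob k d psi M' y a) else 0)"
      by (subst sum.swap) (intro sum.cong refl, simp)
    also have "\<dots> = (\<Sum>a\<in>PiE {..<k} A. real (card F) * (if V x a then ent_prob k d psi Mt x a else 0))"
      by (intro sum.cong refl) (simp add: pe)
    also have "\<dots> = real (card F) * Wf k A V d psi Mt x"
      unfolding Wf_def by (simp add: sum_distrib_left)
    finally show ?thesis unfolding F_def .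
  qed
  show ?thesis using S W by blast
qed



lemma push_unif_sum:
  assumes fin: "finite Y" "Y \<noteq> {}" and finX: "finite X" and fm: "f ` Y \<subseteq> X"
  shows "(\<Sum>x\<in>X. push_unif Y f x) = 1"
proof -
  have "(\<Sum>x\<in>X. real (card {y \<in> Y. f y = x})) = (\<Sum>x\<in>X. \<Sum>y\<in>{y \<in> Y. f y = x}. (1::real))"
    by simp
  also have "\<dots> = (\<Sum>y\<in>Y. (1::real))" by (rule sum.group[OF fin(1) finX fm])
  also have "\<dots> = real (card Y)" by simp
  finally have e: "(\<Sum>x\<in>X. real (card {y \<in> Y. f y = x})) = real (card Y)" .
  have "(\<Sum>x\<in>X. push_unif Y f x) = (\<Sum>x\<in>X. real (card {y \<in> Y. f y = x})) / real (card Y)"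
    unfolding push_unif_def by (simp add: sum_divide_distrib)
  then show ?thesis using e fin by simp
qed

lemma prod_dist_sum:
  fixes p :: "nat \<Rightarrow> 'b \<Rightarrow> real"
  assumes "\<forall>j<k. finite (X j)" "\<forall>j<k. (\<Sum>y\<in>X j. p j y) = 1"
  shows "(\<Sum>x\<in>PiE {..<k} X. \<Prod>j<k. p j (x j)) = 1"
proof -
  have "(\<Sum>x\<in>PiE {..<k} X. \<Prod>j<k. p j (x j)) = (\<Prod>j<k. \<Sum>y\<in>X j. p j y)"
    using assms(1) by (subst prod_sum_PiE) auto
  also have "\<dots> = 1" using assms(2) by simp
  finally show ?thesis .
qed

theorem claim5p1:
  fixes k :: nat
    and X :: "nat \<Rightarrow> 'x set" and A :: "nat \<Rightarrow> 'a set"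
    and mu1 :: "nat \<Rightarrow> 'x \<Rightarrow> real"
    and V :: "(nat \<Rightarrow> 'x) \<Rightarrow> (nat \<Rightarrow> 'a) \<Rightarrow> bool"
    and X' :: "nat \<Rightarrow> 'y set" and f :: "nat \<Rightarrow> 'y \<Rightarrow> 'x"
    and \<gamma> :: real
  assumes k_pos: "0 < k"
    and fin_X: "\<forall>j<k. finite (X j) \<and> X j \<noteq> {}"
    and fin_A: "\<forall>j<k. finite (A j) \<and> A j \<noteq> {}"
    and mu_distr: "\<forall>j<k. (\<forall>x\<in>X j. 0 \<le> mu1 j x) \<and> (\<Sum>x\<in>X j. mu1 j x) = 1"
    and gamma_pos: "0 < \<gamma>"
    and fin_X': "\<forall>j<k. finite (X' j) \<and> X' j \<noteq> {}"
    and f_maps: "\<forall>j<k. f j ` X' j \<subseteq> X j"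
    and f_close: "\<forall>j<k. tv_dist (X j) (push_unif (X' j) (f j)) (mu1 j) \<le> \<gamma> / real k"
  shows "\<bar>val_star k X' A (\<lambda>y. 1 / real (card (PiE {..<k} X')))
              (\<lambda>y a. V (\<lambda>j\<in>{..<k}. f j (y j)) a)
          - val_star k X A (\<lambda>x. \<Prod>j<k. mu1 j (x j)) V\<bar> \<le> \<gamma>"
proof -
  define mu where "mu = (\<lambda>x. \<Prod>j<k. mu1 j (x j))"
  define nu where "nu = (\<lambda>x. \<Prod>j<k. push_unif (X' j) (f j) (x j))"
  define u where "u = (\<lambda>y::nat \<Rightarrow> 'y. 1 / real (card (PiE {..<k} X')))"
  define V' where "V' = (\<lambda>y a. V (Fm k f y) a)"
  have V'eq: "(\<lambda>y a. V (\<lambda>j\<in>{..<k}. f j (y j)) a) = V'" unfolding V'_def Fm_def ..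
  have finX: "\<forall>j<k. finite (X j)" using fin_X by blast
  have finA: "\<forall>j<k. finite (A j)" using fin_A by blast
  have neA: "\<forall>j<k. A j \<noteq> {}" using fin_A by blast
  have finPX: "finite (PiE {..<k} X)" using finX by (intro finite_PiE) auto
  have finPX': "finite (PiE {..<k} X')" using fin_X' by (intro finite_PiE) auto
  have nePX': "PiE {..<k} X' \<noteq> {}" using fin_X' by (simp add: PiE_eq_empty_iff)
  have cardPX': "0 < card (PiE {..<k} X')" using finPX' nePX' by (simp add: card_gt_0_iff)
  have mu_nn: "\<forall>x\<in>PiE {..<k} X. 0 \<le> mu x"
    unfolding mu_def using mu_distr by (auto simp: PiE_iff intro!: prod_nonneg)
  have mu_sum: "(\<Sum>x\<in>PiE {..<k} X. mu x) = 1"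
    unfolding mu_def using finX mu_distr by (intro prod_dist_sum) auto
  have pu_sum: "\<forall>j<k. (\<Sum>x\<in>X j. push_unif (X' j) (f j) x) = 1"
    using fin_X' finX f_maps by (intro allI impI push_unif_sum) auto
  have nu_sum: "(\<Sum>x\<in>PiE {..<k} X. nu x) = 1"
    unfolding nu_def using finX pu_sum by (intro prod_dist_sum) auto
  have u_nn: "\<forall>y\<in>PiE {..<k} X'. 0 \<le> u y" unfolding u_def by simp
  have u_sum: "(\<Sum>y\<in>PiE {..<k} X'. u y) = 1" unfolding u_def using cardPX' by simp
  have tv: "(\<Sum>x\<in>PiE {..<k} X. \<bar>nu x - mu x\<bar>) \<le> 2 * \<gamma>"
  proof -
    have "(\<Sum>x\<in>PiE {..<k} X. \<bar>nu x - mu x\<bar>)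
        \<le> (\<Sum>j<k. \<Sum>y\<in>X j. \<bar>push_unif (X' j) (f j) y - mu1 j y\<bar>)"
      unfolding nu_def mu_def
      by (rule prod_tv) (use finX mu_distr pu_sum in \<open>auto simp: push_unif_def\<close>)
    also have "\<dots> \<le> (\<Sum>j<k. 2 * (\<gamma> / real k))"
    proof (intro sum_mono)
      fix j assume "j \<in> {..<k}"
      then show "(\<Sum>y\<in>X j. \<bar>push_unif (X' j) (f j) y - mu1 j y\<bar>) \<le> 2 * (\<gamma> / real k)"
        using f_close unfolding tv_dist_def by (auto simp: mult.commute)
    qed
    also have "\<dots> = 2 * \<gamma>" using k_pos by simp
    finally show ?thesis .
  qed
  have key: "\<bar>(\<Sum>x\<in>PiE {..<k} X. nu x * Wf k A V d psi M x) - (\<Sum>x\<in>PiE {..<k} X. mu x * Wf k A V d psi M x)\<bar> \<le> \<gamma>"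
    if S: "ent_strategy k X A d psi M" for d psi M
  proof -
    have "\<bar>(\<Sum>x\<in>PiE {..<k} X. nu x * Wf k A V d psi M x) - (\<Sum>x\<in>PiE {..<k} X. mu x * Wf k A V d psi M x)\<bar>
        \<le> (1/2) * (\<Sum>x\<in>PiE {..<k} X. \<bar>nu x - mu x\<bar>)"
      using Wf_bounds[OF S _ finA] by (intro tv_bound[OF finPX _ nu_sum mu_sum]) auto
    also have "\<dots> \<le> \<gamma>" using tv by simp
    finally show ?thesis .
  qed
  define Sg where "Sg = {ent_win k X A mu V d psi M | d psi M. ent_strategy k X A d psi M}"
  define Sg' where "Sg' = {ent_win k X' A u V' d psi M | d psi M. ent_strategy k X' A d psi M}"
  have val: "val_star k X A (\<lambda>x. \<Prod>j<k. mu1 j (x j)) V = Sup Sg"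
    unfolding val_star_def Sg_def mu_def ..
  have val': "val_star k X' A (\<lambda>y. 1 / real (card (PiE {..<k} X'))) (\<lambda>y a. V (\<lambda>j\<in>{..<k}. f j (y j)) a) = Sup Sg'"
    unfolding val_star_def Sg'_def u_def V'eq ..
  have ne: "Sg \<noteq> {}" unfolding Sg_def using strategy_exists[OF neA finA, of X] by blast
  have ne': "Sg' \<noteq> {}" unfolding Sg'_def using strategy_exists[OF neA finA, of X'] by blast
  have bdd: "bdd_above Sg" unfolding Sg_def bdd_above_def
    using ent_win_le1[OF _ finA mu_nn mu_sum] by blast
  have bdd': "bdd_above Sg'" unfolding Sg'_def bdd_above_def
    using ent_win_le1[OF _ finA u_nn u_sum] by blast
  have d1: "s \<le> Sup Sg' + \<gamma>" if "s \<in> Sg" for s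
  proof -
    obtain d psi M where S: "ent_strategy k X A d psi M" and s: "s = ent_win k X A mu V d psi M"
      using \<open>s \<in> Sg\<close> unfolding Sg_def by blast
    have S': "ent_strategy k X' A d psi (\<lambda>j y. M j (f j y))" by (rule dir1_strategy[OF S f_maps])
    have "ent_win k X' A u V' d psi (\<lambda>j y. M j (f j y))
        = (\<Sum>y\<in>PiE {..<k} X'. 1 / real (card (PiE {..<k} X')) * Wf k A V d psi M (Fm k f y))"
      unfolding ent_win_Wf u_def V'_def dir1_Wf ..
    also have "\<dots> = (\<Sum>x\<in>PiE {..<k} X. nu x * Wf k A V d psi M x)"
      unfolding nu_def
    proof (rule regroup[OF finX fin_X' f_maps], intro ballI)
      fix x assume "x \<in> PiE {..<k} X"
      have "(\<Sum>y\<in>{y \<in> PiE {..<k} X'. Fm k f y = x}. Wf k A V d psi M (Fm k f y))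
          = (\<Sum>y\<in>{y \<in> PiE {..<k} X'. Fm k f y = x}. Wf k A V d psi M x)"
        by (intro sum.cong refl) auto
      then show "(\<Sum>y\<in>{y \<in> PiE {..<k} X'. Fm k f y = x}. Wf k A V d psi M (Fm k f y))
          = real (card {y \<in> PiE {..<k} X'. Fm k f y = x}) * Wf k A V d psi M x" by simp
    qed
    finally have w': "ent_win k X' A u V' d psi (\<lambda>j y. M j (f j y)) = (\<Sum>x\<in>PiE {..<k} X. nu x * Wf k A V d psi M x)" .
    have "ent_win k X' A u V' d psi (\<lambda>j y. M j (f j y)) \<in> Sg'" unfolding Sg'_def using S' by blast
    then have "ent_win k X' A u V' d psi (\<lambda>j y. M j (f j y)) \<le> Sup Sg'" using bdd' by (rule cSup_upper)
    moreover have "s \<le> ent_win k X' A u V' d psi (\<lambda>j y. M j (f j y)) + \<gamma>"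
      using key[OF S] w' s ent_win_Wf[of k X A mu V d psi M] by linarith
    ultimately show ?thesis by linarith
  qed
  have d2: "s \<le> Sup Sg + \<gamma>" if "s \<in> Sg'" for s
  proof -
    obtain d psi M' where S': "ent_strategy k X' A d psi M'" and s: "s = ent_win k X' A u V' d psi M'"
      using \<open>s \<in> Sg'\<close> unfolding Sg'_def by blast
    obtain Mt where S: "ent_strategy k X A d psi Mt" and H:
      "\<forall>x\<in>PiE {..<k} X. (\<Sum>y\<in>{y \<in> PiE {..<k} X'. Fm k f y = x}. Wf k A (\<lambda>y a. V (Fm k f y) a) d psi M' y)
        = real (card {y \<in> PiE {..<k} X'. Fm k f y = x}) * Wf k A V d psi Mt x"
      using dir2[OF S' fin_X' finA, where X=X and f=f and V=V] by blast
    have "s = (\<Sum>y\<in>PiE {..<k} X'. 1 / real (card (PiE {..<k} X')) * Wf k A (\<lambda>y a. V (Fm k f y) a) d psi M' y)"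
      unfolding s ent_win_Wf u_def V'_def ..
    also have "\<dots> = (\<Sum>x\<in>PiE {..<k} X. nu x * Wf k A V d psi Mt x)"
      unfolding nu_def by (rule regroup[OF finX fin_X' f_maps H])
    finally have w: "s = (\<Sum>x\<in>PiE {..<k} X. nu x * Wf k A V d psi Mt x)" .
    have "ent_win k X A mu V d psi Mt \<in> Sg" unfolding Sg_def using S by blast
    then have "ent_win k X A mu V d psi Mt \<le> Sup Sg" using bdd by (rule cSup_upper)
    moreover have "s \<le> ent_win k X A mu V d psi Mt + \<gamma>"
      using key[OF S] w ent_win_Wf[of k X A mu V d psi Mt] by linarith
    ultimately show ?thesis by linarith
  qed
  have "Sup Sg \<le> Sup Sg' + \<gamma>" using ne d1 by (intro cSup_least) auto
  moreover have "Sup Sg' \<le> Sup Sg + \<gamma>" using ne' d2 by (intro cSup_least) auto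
  ultimately show ?thesis unfolding val val' by linarith
qed

end
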